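(* Braided crossed modules of Lie algebras are equivalently given by: vector spaces $L_1,L_0$, a linear map $\partial:L_1\to L_0$ and a bilinear map $\{-,-\}:L_0\times L_0\to L_1$ satisfying, for all $a\in L_1$ and $x,u,v,w\in L_0$, (A) $\{\partial a,x\}+\{x,\partial a\}=0$; (B) $\partial\{x,x\}=0$; (C) $\{u,\partial\{v,w\}\}+\{w,\partial\{u,v\}\}+\{v,\partial\{w,u\}\}=0$. Precisely: a braided crossed module satisfies (A),(B),(C), and conversely such data become a braided crossed module of Lie algebras when one defines $[x,y]:=\partial\{x,y\}$ on $L_0$ and $[a,b]:=\{\partial a,\partial b\}$ on $L_1$; these constructions are mutually inverse.
   Context: All vector spaces over a field $k$ of characteristic $\neq2$. A braided crossed module of Lie algebras is a Lie algebra homomorphism $\partial:L_1\to L_0$ with a bilinear map $\{-,-\}:L_0\times L_0\to L_1$ such that for all $x,y,z\in L_0$, $a,b\in L_1$: $\partial\{x,y\}=[x,y]$; $\{\partial a,\partial b\}=[a,b]$; $\{\partial a,x\}+\{x,\partial a\}=0$; $\{x,[y,z]\}+\{z,[x,y]\}+\{y,[z,x]\}=0$. *)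

theory Defs
  imports Complex_Main
begin

definition bilinear_map ::
  "('k::field \<Rightarrow> 'a::ab_group_add \<Rightarrow> 'a) \<Rightarrow> ('k \<Rightarrow> 'b::ab_group_add \<Rightarrow> 'b)
   \<Rightarrow> ('k \<Rightarrow> 'c::ab_group_add \<Rightarrow> 'c) \<Rightarrow> ('a \<Rightarrow> 'b \<Rightarrow> 'c) \<Rightarrow> bool" where
  "bilinear_map sa sb sc f \<longleftrightarrow>
     (\<forall>x. Vector_Spaces.linear sb sc (f x)) \<and> (\<forall>y. Vector_Spaces.linear sa sc (\<lambda>x. f x y))"

definition lie_algebra :: "('k::field \<Rightarrow> 'a::ab_group_add \<Rightarrow> 'a) \<Rightarrow> ('a \<Rightarrow> 'a \<Rightarrow> 'a) \<Rightarrow> bool" where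
  "lie_algebra s br \<longleftrightarrow> vector_space s \<and> bilinear_map s s s br \<and>
     (\<forall>x. br x x = 0) \<and>
     (\<forall>x y z. br x (br y z) + br y (br z x) + br z (br x y) = 0)"

definition lie_hom ::
  "('k::field \<Rightarrow> 'a::ab_group_add \<Rightarrow> 'a) \<Rightarrow> ('k \<Rightarrow> 'b::ab_group_add \<Rightarrow> 'b)
   \<Rightarrow> ('a \<Rightarrow> 'a \<Rightarrow> 'a) \<Rightarrow> ('b \<Rightarrow> 'b \<Rightarrow> 'b) \<Rightarrow> ('a \<Rightarrow> 'b) \<Rightarrow> bool" where
  "lie_hom sa sb bra brb f \<longleftrightarrow> Vector_Spaces.linear sa sb f \<and>
     (\<forall>x y. f (bra x y) = brb (f x) (f y))"

definition braided_crossed_module ::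
  "('k::field \<Rightarrow> 'a::ab_group_add \<Rightarrow> 'a) \<Rightarrow> ('k \<Rightarrow> 'b::ab_group_add \<Rightarrow> 'b)
   \<Rightarrow> ('a \<Rightarrow> 'a \<Rightarrow> 'a) \<Rightarrow> ('b \<Rightarrow> 'b \<Rightarrow> 'b) \<Rightarrow> ('a \<Rightarrow> 'b) \<Rightarrow> ('b \<Rightarrow> 'b \<Rightarrow> 'a) \<Rightarrow> bool" where
  "braided_crossed_module s1 s0 br1 br0 d B \<longleftrightarrow>
     lie_algebra s1 br1 \<and> lie_algebra s0 br0 \<and> lie_hom s1 s0 br1 br0 d \<and>
     bilinear_map s0 s0 s1 B \<and>
     (\<forall>x y. d (B x y) = br0 x y) \<and>
     (\<forall>a b. B (d a) (d b) = br1 a b) \<and>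
     (\<forall>a x. B (d a) x + B x (d a) = 0) \<and>
     (\<forall>x y z. B x (br0 y z) + B z (br0 x y) + B y (br0 z x) = 0)"

definition bcm_data ::
  "('k::field \<Rightarrow> 'a::ab_group_add \<Rightarrow> 'a) \<Rightarrow> ('k \<Rightarrow> 'b::ab_group_add \<Rightarrow> 'b)
   \<Rightarrow> ('a \<Rightarrow> 'b) \<Rightarrow> ('b \<Rightarrow> 'b \<Rightarrow> 'a) \<Rightarrow> bool" where
  "bcm_data s1 s0 d B \<longleftrightarrow>
     Vector_Spaces.linear s1 s0 d \<and> bilinear_map s0 s0 s1 B \<and>
     (\<forall>a x. B (d a) x + B x (d a) = 0) \<and>
     (\<forall>x. d (B x x) = 0) \<and>
     (\<forall>u v w. B u (d (B v w)) + B w (d (B u v)) + B v (d (B w u)) = 0)"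

end

theory Submission
  imports Defs
begin

lemma two_zero:
  fixes s :: "'k::field \<Rightarrow> 'a::ab_group_add \<Rightarrow> 'a" and v :: 'a
  assumes vs: "vector_space s" and two: "(2::'k::field) \<noteq> 0" and h: "v + v = 0"
  shows "v = 0"
proof -
  have m: "module s" using vs by (simp add: vector_space_def module_def)
  have "s (1 + 1) v = s 1 v + s 1 v" by (rule module.scale_left_distrib[OF m])
  hence "s (1 + 1) v = v + v" by (simp only: module.scale_one[OF m])
  hence "s 2 v = 0" using h by (simp only: one_add_one)
  hence "s (inverse 2) (s 2 v) = 0" by (simp add: module.scale_zero_right[OF m])
  moreover have "s (inverse 2) (s 2 v) = v" using two
    by (simp add: module.scale_scale[OF m] module.scale_one[OF m])
  ultimately show ?thesis by simp
qed

lemma lin_add: "Vector_Spaces.linear s1 s2 f \<Longrightarrow> f (x + y) = f x + f y"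
  unfolding Vector_Spaces.linear_iff by blast

lemma lin_zero: "Vector_Spaces.linear s1 s2 f \<Longrightarrow> f 0 = 0"
proof -
  assume l: "Vector_Spaces.linear s1 s2 f"
  have "f (0 + 0) = f 0 + f 0" by (rule lin_add[OF l])
  thus ?thesis by simp
qed

lemma lin_comp: "Vector_Spaces.linear s1 s2 f \<Longrightarrow> Vector_Spaces.linear s2 s3 g \<Longrightarrow>
   Vector_Spaces.linear s1 s3 (\<lambda>x. g (f x))"
  using Vector_Spaces.linear_compose[of s1 s2 f s3 g] by (simp add: comp_def)

theorem proposition4p2:
  fixes s1 :: "'k::field \<Rightarrow> 'a::ab_group_add \<Rightarrow> 'a"
    and s0 :: "'k \<Rightarrow> 'b::ab_group_add \<Rightarrow> 'b"
  assumes "vector_space s1" and "vector_space s0" and "(2::'k) \<noteq> 0"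
  shows "(\<forall>br1 br0 d B. braided_crossed_module s1 s0 br1 br0 d B \<longrightarrow>
            bcm_data s1 s0 d B \<and>
            br0 = (\<lambda>x y. d (B x y)) \<and> br1 = (\<lambda>a b. B (d a) (d b))) \<and>
         (\<forall>d B. bcm_data s1 s0 d B \<longrightarrow>
            braided_crossed_module s1 s0 (\<lambda>a b. B (d a) (d b)) (\<lambda>x y. d (B x y)) d B)"
proof (rule conjI; intro allI impI)
  fix br1 br0 d B
  assume h: "braided_crossed_module s1 s0 br1 br0 d B"
  have e0: "br0 = (\<lambda>x y. d (B x y))" and e1: "br1 = (\<lambda>a b. B (d a) (d b))"
    using h unfolding braided_crossed_module_def by (auto intro!: ext)
  have "bcm_data s1 s0 d B"
    using h unfolding braided_crossed_module_def bcm_data_def lie_hom_def lie_algebra_def e0 e1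
    by simp
  then show "bcm_data s1 s0 d B \<and> br0 = (\<lambda>x y. d (B x y)) \<and> br1 = (\<lambda>a b. B (d a) (d b))"
    using e0 e1 by simp
next
  fix d B
  assume h: "bcm_data s1 s0 d B"
  have ld: "Vector_Spaces.linear s1 s0 d" and bB: "bilinear_map s0 s0 s1 B"
    and A: "\<And>a x. B (d a) x + B x (d a) = 0" and Bc: "\<And>x. d (B x x) = 0"
    and C: "\<And>u v w. B u (d (B v w)) + B w (d (B u v)) + B v (d (B w u)) = 0"
    using h unfolding bcm_data_def by auto
  have l1: "\<And>x. Vector_Spaces.linear s0 s1 (B x)" and l2: "\<And>y. Vector_Spaces.linear s0 s1 (\<lambda>x. B x y)"
    using bB unfolding bilinear_map_def by auto
  have la1: "lie_algebra s1 (\<lambda>a b. B (d a) (d b))"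
    unfolding lie_algebra_def bilinear_map_def
  proof (intro conjI allI)
    show "vector_space s1" by fact
    fix x show "Vector_Spaces.linear s1 s1 (\<lambda>b. B (d x) (d b))" by (rule lin_comp[OF ld l1])
  next
    fix y show "Vector_Spaces.linear s1 s1 (\<lambda>a. B (d a) (d y))" by (rule lin_comp[OF ld l2])
  next
    fix x show "B (d x) (d x) = 0" using two_zero[OF assms(1) assms(3) A[of x "d x"]] .
  next
    fix x y z
    show "B (d x) (d (B (d y) (d z))) + B (d y) (d (B (d z) (d x))) + B (d z) (d (B (d x) (d y))) = 0"
      using C[of "d x" "d y" "d z"] by (simp add: ac_simps)
  qed
  have la0: "lie_algebra s0 (\<lambda>x y. d (B x y))"
    unfolding lie_algebra_def bilinear_map_def
  proof (intro conjI allI)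
    show "vector_space s0" by fact
    fix x show "Vector_Spaces.linear s0 s0 (\<lambda>y. d (B x y))" by (rule lin_comp[OF l1 ld])
  next
    fix y show "Vector_Spaces.linear s0 s0 (\<lambda>x. d (B x y))" by (rule lin_comp[OF l2 ld])
  next
    fix x show "d (B x x) = 0" by (rule Bc)
  next
    fix x y z
    have "d (B x (d (B y z)) + B z (d (B x y)) + B y (d (B z x))) = 0"
      using C[of x y z] lin_zero[OF ld] by simp
    thus "d (B x (d (B y z))) + d (B y (d (B z x))) + d (B z (d (B x y))) = 0"
      by (simp add: lin_add[OF ld] ac_simps)
  qed
  show "braided_crossed_module s1 s0 (\<lambda>a b. B (d a) (d b)) (\<lambda>x y. d (B x y)) d B"
    unfolding braided_crossed_module_def lie_hom_def
    using la1 la0 ld bB A C by auto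
qed

end
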